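(* Consider the linear advection equation $\partial_t u+\partial_x(\lambda u)=0$ with constant $\lambda>0$ on a uniform grid of $\mathbb{R}$ with cells $T^{(i)}=[x_{i-1/2},x_{i+1/2}]$, $x_{i+1/2}=(i+\tfrac12)h$, $h>0$. Let $N\le M$ be integers, let $\mathcal{V}_h$ be the space of functions that are polynomials of degree at most $N$ on each cell, and let $t\mapsto u_h(\cdot,t)\in\mathcal{V}_h$ be differentiable in $t$. Let $w_h(\cdot,t)$ be piecewise polynomial of degree at most $M$ on each cell, satisfying $\int_{T^{(i)}}\varphi\, w_h\,dx=\int_{T^{(i)}}\varphi\, u_h\,dx$ for all cells $T^{(i)}$ and all $\varphi\in\mathcal{V}_h$. Denote one-sided limits at interfaces by $u^{\pm}_{i+1/2}$, $w^{\pm}_{i+1/2}$ (superscript $-$: limit from the left, $+$: from the right). Suppose $u_h$ satisfies the semi-discrete $P_NP_M$ scheme with the upwind flux $f^w_{i+1/2}=\lambda w^-_{i+1/2}$: $$\int_{T^{(i)}}\partial_t u_h\,\varphi\,dx+f^w_{i+1/2}\varphi^-_{i+1/2}-f^w_{i-1/2}\varphi^+_{i-1/2}-\int_{T^{(i)}}\lambda w_h\,\varphi'\,dx=0\quad\text{for all }\varphi\in\mathcal{V}_h\text{ and all } i.$$ Let $E^{(i)}(t)=\int_{T^{(i)}}\tfrac12 u_h(x,t)^2\,dx$, $g(u)=\lambda u^2/2$ and $\tilde F_{i+1/2}=f^w_{i+1/2}u^-_{i+1/2}-g(u^-_{i+1/2})$. If at the interface $x_{i-1/2}$ either (a) $u^-_{i-1/2}>u^+_{i-1/2}$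 and $w^-_{i-1/2}\ge \tfrac12\big(u^-_{i-1/2}+u^+_{i-1/2}\big)$, or (b) $u^-_{i-1/2}<u^+_{i-1/2}$ and $w^-_{i-1/2}\le \tfrac12\big(u^-_{i-1/2}+u^+_{i-1/2}\big)$, then the cell square-entropy inequality $$\frac{d}{dt}E^{(i)}+\tilde F_{i+1/2}-\tilde F_{i-1/2}\le 0$$ holds for the cell $T^{(i)}$.
   Context: $\tilde F_{i+1/2}$ is a numerical entropy flux consistent with the entropy flux $F(u)=f(u)u-g(u)$ of the square entropy $Q(u)=u^2/2$, where $g$ is a primitive of $f(u)=\lambda u$. The function $w_h$ is the high-order reconstruction of $u_h$ used in the $P_NP_M$ scheme; only the stated moment-preservation property of $w_h$ is assumed. *)

theory Defs
  imports "HOL-Analysis.Analysis" "HOL-Computational_Algebra.Polynomial"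
begin

definition xhalf :: "real \<Rightarrow> int \<Rightarrow> real" where
  "xhalf h i = (real_of_int i + 1/2) * h"

definition cell :: "real \<Rightarrow> int \<Rightarrow> real set" where
  "cell h i = {xhalf h (i - 1) .. xhalf h i}"

end

theory Submission imports Defs begin

lemma poly_sumN:
  fixes p :: "real poly"
  assumes "degree p \<le> N"
  shows "poly p x = (\<Sum>k\<le>N. coeff p k * x ^ k)"
proof -
  have "poly p x = (\<Sum>k\<le>degree p. coeff p k * x ^ k)" by (rule poly_altdef)
  also have "\<dots> = (\<Sum>k\<le>N. coeff p k * x ^ k)"
    by (rule sum.mono_neutral_left) (use assms le_degree in auto)
  finally show ?thesis .
qed

lemma int_prod:
  fixes p q :: "real poly"
  assumes "degree p \<le> N" "degree q \<le> N"
  shows "integral {a..b} (\<lambda>x. poly p x * poly q x)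
    = (\<Sum>k\<le>N. \<Sum>l\<le>N. coeff p k * coeff q l * integral {a..b} (\<lambda>x. x ^ (k + l)))"
proof -
  have "(\<lambda>x. poly p x * poly q x) = (\<lambda>x. \<Sum>k\<le>N. \<Sum>l\<le>N. coeff p k * coeff q l * x ^ (k + l))"
    by (rule ext) (simp add: poly_sumN[OF assms(1)] poly_sumN[OF assms(2)] sum_product
        power_add mult_ac)
  moreover have "\<And>k l. (\<lambda>x::real. coeff p k * coeff q l * x ^ (k + l)) integrable_on {a..b}"
    by (intro integrable_continuous_interval continuous_intros)
  ultimately show ?thesis
    by (simp add: integral_sum integrable_sum integral_mult_right)
qed

theorem mainTheorem3:
  fixes lam h :: real and N M :: nat and i :: int and t :: real
    and U Ut W :: "int \<Rightarrow> real \<Rightarrow> real poly"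
  assumes lam_pos: "lam > 0" and h_pos: "h > 0" and NM: "N \<le> M"
    and U_deg: "\<And>j s. degree (U j s) \<le> N"
    and U_diff: "\<And>j s k. ((\<lambda>r. coeff (U j r) k) has_real_derivative coeff (Ut j s) k) (at s)"
    and W_deg: "\<And>j s. degree (W j s) \<le> M"
    and W_moments: "\<And>j s \<phi>. degree \<phi> \<le> N \<Longrightarrow>
        integral (cell h j) (\<lambda>x. poly \<phi> x * poly (W j s) x)
      = integral (cell h j) (\<lambda>x. poly \<phi> x * poly (U j s) x)"
    and scheme: "\<And>j s (\<phi> :: int \<Rightarrow> real poly). (\<forall>k. degree (\<phi> k) \<le> N) \<Longrightarrow>
        integral (cell h j) (\<lambda>x. poly (Ut j s) x * poly (\<phi> j) x)
        + lam * poly (W j s) (xhalf h j) * poly (\<phi> j) (xhalf h j)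
        - lam * poly (W (j - 1) s) (xhalf h (j - 1)) * poly (\<phi> j) (xhalf h (j - 1))
        - integral (cell h j) (\<lambda>x. lam * poly (W j s) x * poly (pderiv (\<phi> j)) x) = 0"
    and interface:
      "(poly (U (i - 1) t) (xhalf h (i - 1)) > poly (U i t) (xhalf h (i - 1)) \<and>
          poly (W (i - 1) t) (xhalf h (i - 1))
            \<ge> (poly (U (i - 1) t) (xhalf h (i - 1)) + poly (U i t) (xhalf h (i - 1))) / 2)
     \<or> (poly (U (i - 1) t) (xhalf h (i - 1)) < poly (U i t) (xhalf h (i - 1)) \<and>
          poly (W (i - 1) t) (xhalf h (i - 1))
            \<le> (poly (U (i - 1) t) (xhalf h (i - 1)) + poly (U i t) (xhalf h (i - 1))) / 2)"
  shows "deriv (\<lambda>s. integral (cell h i) (\<lambda>x. (poly (U i s) x)^2 / 2)) t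
         + (lam * poly (W i t) (xhalf h i) * poly (U i t) (xhalf h i)
            - lam * (poly (U i t) (xhalf h i))^2 / 2)
         - (lam * poly (W (i - 1) t) (xhalf h (i - 1)) * poly (U (i - 1) t) (xhalf h (i - 1))
            - lam * (poly (U (i - 1) t) (xhalf h (i - 1)))^2 / 2) \<le> 0"
proof -
  define a where "a = xhalf h (i - 1)"
  define b where "b = xhalf h i"
  define u where "u = U i t"
  have cellab: "cell h i = {a..b}" by (simp add: cell_def a_def b_def)
  have ab: "a \<le> b" using h_pos by (simp add: a_def b_def xhalf_def field_simps)
  have Ut_deg: "\<And>j s. degree (Ut j s) \<le> N"
  proof -
    fix j s
    show "degree (Ut j s) \<le> N"
    proof (rule degree_le, intro allI impI)
      fix k assume k: "N < k"
      have "(\<lambda>r. coeff (U j r) k) = (\<lambda>r. 0)"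
        using U_deg[of j] k by (intro ext coeff_eq_0) (meson le_less_trans)
      hence "((\<lambda>r. 0) has_real_derivative coeff (Ut j s) k) (at s)" using U_diff[of j k s] by simp
      thus "coeff (Ut j s) k = 0" using DERIV_const DERIV_unique by blast
    qed
  qed
  define m where "m k l = integral {a..b} (\<lambda>x::real. x ^ (k + l))" for k l
  define c where "c k s = coeff (U i s) k" for k s
  define d where "d k = coeff (Ut i t) k" for k
  have Eeq: "(\<lambda>s. integral (cell h i) (\<lambda>x. (poly (U i s) x)^2 / 2))
      = (\<lambda>s. (\<Sum>k\<le>N. \<Sum>l\<le>N. c k s * c l s * m k l) / 2)"
  proof
    fix s
    have "integral (cell h i) (\<lambda>x. (poly (U i s) x)^2 / 2)
        = integral {a..b} (\<lambda>x. poly (U i s) x * poly (U i s) x) / 2"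
      by (simp add: cellab power2_eq_square integral_divide)
    also have "\<dots> = (\<Sum>k\<le>N. \<Sum>l\<le>N. c k s * c l s * m k l) / 2"
      by (simp add: int_prod[OF U_deg U_deg] c_def m_def)
    finally show "integral (cell h i) (\<lambda>x. (poly (U i s) x)^2 / 2)
        = (\<Sum>k\<le>N. \<Sum>l\<le>N. c k s * c l s * m k l) / 2" .
  qed
  have cd: "\<And>k. ((\<lambda>s. c k s) has_real_derivative d k) (at t)"
    unfolding c_def d_def by (rule U_diff)
  have der: "((\<lambda>s. (\<Sum>k\<le>N. \<Sum>l\<le>N. c k s * c l s * m k l) / 2) has_real_derivative
      (\<Sum>k\<le>N. \<Sum>l\<le>N. (d k * c l t + c k t * d l) * m k l) / 2) (at t)"
    by (intro DERIV_cdivide DERIV_sum) (auto intro!: derivative_eq_intros cd)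
  have "deriv (\<lambda>s. integral (cell h i) (\<lambda>x. (poly (U i s) x)^2 / 2)) t
      = (\<Sum>k\<le>N. \<Sum>l\<le>N. (d k * c l t + c k t * d l) * m k l) / 2"
    unfolding Eeq by (rule DERIV_imp_deriv[OF der])
  also have "\<dots> = ((\<Sum>k\<le>N. \<Sum>l\<le>N. d k * c l t * m k l) + (\<Sum>k\<le>N. \<Sum>l\<le>N. c k t * d l * m k l)) / 2"
    by (simp add: distrib_right sum.distrib)
  also have "(\<Sum>k\<le>N. \<Sum>l\<le>N. c k t * d l * m k l) = (\<Sum>k\<le>N. \<Sum>l\<le>N. d k * c l t * m k l)"
    by (subst sum.swap) (simp add: m_def add.commute mult_ac)
  also have "(\<Sum>k\<le>N. \<Sum>l\<le>N. d k * c l t * m k l) = integral (cell h i) (\<lambda>x. poly (Ut i t) x * poly u x)"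
    by (simp add: cellab int_prod[OF Ut_deg U_deg] c_def d_def m_def u_def)
  finally have dE: "deriv (\<lambda>s. integral (cell h i) (\<lambda>x. (poly (U i s) x)^2 / 2)) t
      = integral (cell h i) (\<lambda>x. poly (Ut i t) x * poly u x)" by simp
  have sch: "integral (cell h i) (\<lambda>x. poly (Ut i t) x * poly u x)
        + lam * poly (W i t) b * poly u b
        - lam * poly (W (i - 1) t) a * poly u a
        - integral (cell h i) (\<lambda>x. lam * poly (W i t) x * poly (pderiv u) x) = 0"
    using scheme[of "\<lambda>_. u" i t] U_deg by (simp add: a_def b_def u_def)
  have dpd: "degree (pderiv u) \<le> N" using U_deg[of i t] by (simp add: degree_pderiv u_def)
  have "integral (cell h i) (\<lambda>x. lam * poly (W i t) x * poly (pderiv u) x)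
      = lam * integral (cell h i) (\<lambda>x. poly (pderiv u) x * poly (W i t) x)"
  proof -
    have "(\<lambda>x. lam * poly (W i t) x * poly (pderiv u) x) = (\<lambda>x. lam * (poly (pderiv u) x * poly (W i t) x))"
      by (simp add: mult_ac)
    thus ?thesis by (simp add: integral_mult_right)
  qed
  also have "\<dots> = lam * integral {a..b} (\<lambda>x. poly (pderiv u) x * poly u x)"
    using W_moments[OF dpd, of i t] by (simp add: cellab u_def)
  also have "integral {a..b} (\<lambda>x. poly (pderiv u) x * poly u x) = (poly u b)^2/2 - (poly u a)^2/2"
  proof -
    have "((\<lambda>x. poly (pderiv u) x * poly u x) has_integral ((\<lambda>x. poly u x ^ 2 / 2) b - (\<lambda>x. poly u x ^ 2 / 2) a)) {a..b}"
    proof (rule fundamental_theorem_of_calculus[OF ab])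
      fix x assume "x \<in> {a..b}"
      have "((\<lambda>x. poly u x ^ 2 / 2) has_real_derivative (poly (pderiv u) x * poly u x)) (at x)"
        by (auto intro!: derivative_eq_intros poly_DERIV)
      thus "((\<lambda>x. poly u x ^ 2 / 2) has_vector_derivative (poly (pderiv u) x * poly u x)) (at x within {a..b})"
        by (simp add: has_real_derivative_iff_has_vector_derivative has_vector_derivative_at_within)
    qed
    thus ?thesis by (simp add: integral_unique)
  qed
  finally have iw: "integral (cell h i) (\<lambda>x. lam * poly (W i t) x * poly (pderiv u) x)
      = lam * ((poly u b)^2/2 - (poly u a)^2/2)" .
  define up where "up = poly (U (i - 1) t) a"
  define wm where "wm = poly (W (i - 1) t) a"
  have key: "lam * ((poly u a - up) * (wm - (up + poly u a) / 2)) \<le> 0"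
  proof -
    have "(poly u a - up) * (wm - (up + poly u a) / 2) \<le> 0"
      using interface unfolding up_def wm_def u_def a_def
      by (auto intro: mult_nonpos_nonneg mult_nonneg_nonpos)
    thus ?thesis using lam_pos by (simp add: mult_nonneg_nonpos)
  qed
  define I1 where "I1 = integral (cell h i) (\<lambda>x. poly (Ut i t) x * poly u x)"
  define I2 where "I2 = integral (cell h i) (\<lambda>x. lam * poly (W i t) x * poly (pderiv u) x)"
  have sch2: "I1 + lam * poly (W i t) b * poly u b - lam * wm * poly u a - I2 = 0"
    using sch unfolding I1_def I2_def wm_def by simp
  have iw2: "I2 = lam * ((poly u b)^2/2 - (poly u a)^2/2)" using iw unfolding I2_def .
  have eq: "I1 + (lam * poly (W i t) b * poly u b - lam * (poly u b)^2 / 2)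
         - (lam * wm * up - lam * up^2 / 2)
       = lam * ((poly u a - up) * (wm - (up + poly u a) / 2))"
  proof -
    have "I1 = lam * wm * poly u a - lam * poly (W i t) b * poly u b + I2" using sch2 by linarith
    thus ?thesis unfolding iw2 by (simp add: field_simps power2_eq_square)
  qed
  show ?thesis
    unfolding dE using eq key
    unfolding a_def[symmetric] b_def[symmetric] u_def[symmetric] up_def[symmetric] wm_def[symmetric] I1_def
    by linarith
qed

end
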